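(* Let $\alpha,a,b\in\mathbb{C}$ be such that none of $\alpha+a,\alpha-a,\alpha+b,\alpha-b$ belongs to $\{0,-1,-2,\ldots\}$. Then \[ \sum_{k=0}^{\infty}\frac{k+\alpha}{((k+\alpha)^2-a^2)((k+\alpha)^2-b^2)} =\frac12\sum_{n=1}^{\infty}\frac{(-1)^{n-1}(1\pm a\pm b)_{n-1}(\alpha\pm a)_{n-1}(\alpha\pm b)_{n-1}}{n\binom{2n}{n}(\alpha\pm a)_{2n}(\alpha\pm b)_{2n}}\,q(n), \] where \[ q(n)=2(2n-1)(3n+2\alpha-3)((2n+\alpha-1)^2-a^2)((2n+\alpha-1)^2-b^2)+((n+\alpha-1)^2-a^2)((n+\alpha-1)^2-b^2)\bigl(13n^2-10n(1-\alpha)+2(1-\alpha)^2-a^2-b^2\bigr). \]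
   Context: $(x)_n=x(x+1)\cdots(x+n-1)$, $(x)_0=1$. The notation $(u\pm v\pm w)_m$ denotes $(u+v+w)_m(u+v-w)_m(u-v+w)_m(u-v-w)_m$, and $(u\pm v)_m=(u+v)_m(u-v)_m$. *)

theory Defs
  imports Complex_Main
begin

definition q4 :: "complex \<Rightarrow> complex \<Rightarrow> complex \<Rightarrow> nat \<Rightarrow> complex" where
  "q4 \<alpha> a b n =
     2 * (2 * of_nat n - 1) * (3 * of_nat n + 2 * \<alpha> - 3)
       * ((2 * of_nat n + \<alpha> - 1)^2 - a^2) * ((2 * of_nat n + \<alpha> - 1)^2 - b^2)
   + ((of_nat n + \<alpha> - 1)^2 - a^2) * ((of_nat n + \<alpha> - 1)^2 - b^2)
       * (13 * of_nat n ^ 2 - 10 * of_nat n * (1 - \<alpha>) + 2 * (1 - \<alpha>)^2 - a^2 - b^2)"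

text \<open>The n-th summand (n \<ge> 1) of the right-hand series, without the factor 1/2.\<close>
definition rhs4 :: "complex \<Rightarrow> complex \<Rightarrow> complex \<Rightarrow> nat \<Rightarrow> complex" where
  "rhs4 \<alpha> a b n =
     ((-1) ^ (n - 1)
       * pochhammer (1 + a + b) (n - 1) * pochhammer (1 + a - b) (n - 1)
       * pochhammer (1 - a + b) (n - 1) * pochhammer (1 - a - b) (n - 1)
       * pochhammer (\<alpha> + a) (n - 1) * pochhammer (\<alpha> - a) (n - 1)
       * pochhammer (\<alpha> + b) (n - 1) * pochhammer (\<alpha> - b) (n - 1))
     / (of_nat n * of_nat ((2 * n) choose n)
       * pochhammer (\<alpha> + a) (2 * n) * pochhammer (\<alpha> - a) (2 * n)
       * pochhammer (\<alpha> + b) (2 * n) * pochhammer (\<alpha> - b) (2 * n))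
     * q4 \<alpha> a b n"

definition lhs4 :: "complex \<Rightarrow> complex \<Rightarrow> complex \<Rightarrow> nat \<Rightarrow> complex" where
  "lhs4 \<alpha> a b k =
     (of_nat k + \<alpha>) / (((of_nat k + \<alpha>)^2 - a^2) * ((of_nat k + \<alpha>)^2 - b^2))"

end

theory Submission
  imports Defs "HOL-Analysis.Analysis"
begin

definition DD :: "complex \<Rightarrow> complex \<Rightarrow> complex \<Rightarrow> complex" where
  "DD a b y = (y^2-a^2)*(y^2-b^2)"
definition pp :: "complex \<Rightarrow> complex \<Rightarrow> nat \<Rightarrow> complex" where
  "pp a b n = pochhammer (1+a+b) n * pochhammer (1+a-b) n * pochhammer (1-a+b) n * pochhammer (1-a-b) n"
definition kap :: "complex \<Rightarrow> complex \<Rightarrow> nat \<Rightarrow> complex" where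
  "kap a b n = (-1)^n * pp a b n / (2 * of_nat ((2*n) choose n))"
definition PP :: "complex \<Rightarrow> complex \<Rightarrow> nat \<Rightarrow> complex \<Rightarrow> complex" where
  "PP a b n y = (\<Prod>i<Suc n. DD a b (y + of_nat i))"
definition RR :: "complex \<Rightarrow> complex \<Rightarrow> nat \<Rightarrow> complex \<Rightarrow> complex" where
  "RR a b n y = 2*y^2 + 2*(3* of_nat n+1)*y + 5*( of_nat n)^2 + 4* of_nat n + 1 - a^2 - b^2"
definition FF :: "complex \<Rightarrow> complex \<Rightarrow> complex \<Rightarrow> nat \<Rightarrow> nat \<Rightarrow> complex" where
  "FF al a b n k = kap a b n * (2*(al + of_nat k) + of_nat n) / PP a b n (al + of_nat k)"
definition GG :: "complex \<Rightarrow> complex \<Rightarrow> complex \<Rightarrow> nat \<Rightarrow> nat \<Rightarrow> complex" where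
  "GG al a b n k = kap a b n * RR a b n (al + of_nat k) / (2*(2* of_nat n+1) * PP a b n (al + of_nat k))"

lemma core1:
  fixes x a b m :: complex
  shows "-((m+1+a+b)*(m+1+a-b)*(m+1-a+b)*(m+1-a-b))*(m+1)*(2*x+m+1) - 2*(2*m+1)*(2*x+m)*(((x+m+1)^2-a^2)*((x+m+1)^2-b^2))
        = (2*(x+1)^2 + 2*(3*m+1)*(x+1) + 5*m^2 + 4*m + 1 - a^2 - b^2)*((x^2-a^2)*(x^2-b^2)) - (2*x^2 + 2*(3*m+1)*x + 5*m^2 + 4*m + 1 - a^2 - b^2) * (((x+m+1)^2-a^2)*((x+m+1)^2-b^2))"
  by algebra

lemma binom_rel: "Suc n * ((2 * Suc n) choose Suc n) = 2 * (2*n+1) * ((2*n) choose n)"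
proof -
  define X where "X = (2 * Suc n) choose Suc n"
  define Y where "Y = Suc (2*n) choose n"
  define C where "C = (2*n) choose n"
  have 1: "Suc n * X = 2 * Suc n * Y"
    unfolding X_def Y_def using Suc_times_binomial[of n "Suc (2*n)"] by simp
  have 2: "Suc n * Y = Suc (2*n) * C"
    unfolding Y_def C_def
    using Suc_times_binomial[of n "2*n"] binomial_symmetric[of n "Suc (2*n)"] by simp
  have "Suc n * (Suc n * X) = Suc n * (2 * (2*n+1) * C)"
    using 1 2 by (metis mult.assoc mult.left_commute Suc_eq_plus1 add.commute)
  then have "Suc n * X = 2 * (2*n+1) * C" by (metis mult_left_cancel nat.simps(3))
  then show ?thesis unfolding X_def C_def .
qed

lemma kap_Suc: "kap a b (Suc n) = kap a b n *
   (-(( of_nat n+1+a+b)*( of_nat n+1+a-b)*( of_nat n+1-a+b)*( of_nat n+1-a-b))*( of_nat n+1) / (2*(2 * of_nat n+1)))"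
proof -
  define X where "X = (2 * Suc n) choose Suc n"
  define C where "C = (2*n) choose n"
  have B: "( of_nat n + 1 :: complex) * of_nat X = 2 * (2 * of_nat n+1) * of_nat C"
  proof -
    have "( of_nat (Suc n * X) :: complex) = of_nat (2 * (2*n+1) * C)"
      using binom_rel[of n, folded X_def C_def] by metis
    then show ?thesis by (simp add: algebra_simps)
  qed
  have Cpos: "C > 0" unfolding C_def by simp
  have P: "pp a b (Suc n) = pp a b n * ((1+a+b+ of_nat n)*(1+a-b+ of_nat n)*(1-a+b+ of_nat n)*(1-a-b+ of_nat n))"
    unfolding pp_def pochhammer_Suc by (simp add: algebra_simps)
  have nz1: "(2 * of_nat n+1 :: complex) \<noteq> 0"
    by (metis of_nat_Suc of_nat_eq_0_iff mult_2 add.commute nat.distinct(1) of_nat_add of_nat_mult)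
  have nz2: "( of_nat n + 1 :: complex) \<noteq> 0"
    by (metis of_nat_Suc of_nat_eq_0_iff add.commute nat.distinct(1))
  have B2: "( of_nat X :: complex) = 2 * (2 * of_nat n+1) * of_nat C / ( of_nat n + 1)"
    using B nz2 by (simp add: field_simps)
  have K: "kap a b (Suc n) = (-1)^(Suc n) * pp a b (Suc n) / (2 * of_nat X)"
    unfolding kap_def X_def by (rule refl)
  have K0: "kap a b n = (-1)^n * pp a b n / (2 * of_nat C)"
    unfolding kap_def C_def by (rule refl)
  show ?thesis
    unfolding K K0 P B2 using Cpos nz1 nz2
    by (simp add: field_simps)
qed


lemma PP_Suc1: "PP a b (Suc n) y = PP a b n y * DD a b (y + of_nat (Suc n))"
  unfolding PP_def by (simp add: prod.lessThan_Suc)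

lemma PP_Suc2: "PP a b (Suc n) y = DD a b y * PP a b n (y + 1)"
  unfolding PP_def prod.lessThan_Suc_shift by (simp add: add_ac)

lemma aux_cancel: "(q::complex) \<noteq> 0 \<Longrightarrow> (z * q) / (w * (q * s)) * t / 2 = z * t / (2 * w * s)"
  by (cases "w=0"; cases "s=0") (simp_all add: field_simps)

lemma prod_lessThan_add_split: fixes m j :: nat shows "(\<Prod>i<m+j. f i) = (\<Prod>i<m. f i) * (\<Prod>i<j. f (m+i))"
  by (induction j) (simp_all add: mult_ac)

lemma Qlem: "pochhammer (al+a) m * pochhammer (al-a) m * pochhammer (al+b) m * pochhammer (al-b) m
   = (\<Prod>i<m. DD a b (al + of_nat i))"
proof (induction m)
  case 0 then show ?case by simp
next
  case (Suc m)
  have "pochhammer (al+a) (Suc m) * pochhammer (al-a) (Suc m) * pochhammer (al+b) (Suc m) * pochhammer (al-b) (Suc m)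
     = (pochhammer (al+a) m * pochhammer (al-a) m * pochhammer (al+b) m * pochhammer (al-b) m)
       * ((al+a+ of_nat m)*(al-a+ of_nat m)*(al+b+ of_nat m)*(al-b+ of_nat m))"
    unfolding pochhammer_Suc by (simp add: mult_ac)
  also have "(al+a+ of_nat m)*(al-a+ of_nat m)*(al+b+ of_nat m)*(al-b+ of_nat m) = DD a b (al + of_nat m)"
    unfolding DD_def by algebra
  finally show ?case using Suc by (simp add: prod.lessThan_Suc)
qed

lemma core2:
  fixes al a b :: complex and n :: nat
  shows "q4 al a b (Suc n) = 2*(2 * of_nat n+1)*(2*(al + of_nat n) + of_nat n) * DD a b (al + of_nat n + (of_nat n + 1))
     + RR a b n (al + of_nat n + 1) * DD a b (al + of_nat n)"
  unfolding q4_def DD_def RR_def of_nat_Suc by algebra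

lemma lim_inv_shift: "(\<lambda>k. inverse (be + of_nat k :: complex)) \<longlonglongrightarrow> 0"
proof -
  have "filterlim (\<lambda>k. be + of_nat k :: complex) at_infinity sequentially"
    by (rule tendsto_add_filterlim_at_infinity[OF tendsto_const tendsto_of_nat])
  then show ?thesis using filterlim_compose[OF tendsto_inverse_0] by blast
qed

lemma ev_nz_shift: "eventually (\<lambda>k. be + of_nat k \<noteq> (0::complex)) sequentially"
proof -
  have "be + of_nat k \<noteq> 0" if "k \<ge> nat \<lceil>norm be\<rceil> + 1" for k
  proof
    assume "be + of_nat k = 0"
    then have "of_nat k = - be" by (simp add: add_eq_0_iff)
    then have "real k = norm be" by (metis norm_minus_cancel norm_of_nat)
    moreover have "real k > norm be" using that by linarith
    ultimately show False by simp
  qed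
  then show ?thesis unfolding eventually_sequentially by blast
qed

lemma ratlim: "(\<lambda>k. (c2*(be + of_nat k)^2 + c1*(be + of_nat k) + c0) / DD a b (be + of_nat k)) \<longlonglongrightarrow> 0"
proof -
  define t where "t = (\<lambda>k. inverse (be + of_nat k :: complex))"
  have t0: "t \<longlonglongrightarrow> 0" unfolding t_def by (rule lim_inv_shift)
  have "(\<lambda>k. (c2*(t k)^2 + c1*(t k)^3 + c0*(t k)^4) / ((1 - a^2*(t k)^2)*(1 - b^2*(t k)^2)))
     \<longlonglongrightarrow> (c2*0^2 + c1*0^3 + c0*0^4) / ((1 - a^2*0^2)*(1 - b^2*0^2))"
    by (intro tendsto_intros t0) simp
  then have L: "(\<lambda>k. (c2*(t k)^2 + c1*(t k)^3 + c0*(t k)^4) / ((1 - a^2*(t k)^2)*(1 - b^2*(t k)^2))) \<longlonglongrightarrow> 0"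
    by simp
  show ?thesis
  proof (rule Lim_transform_eventually[OF L])
    show "\<forall>\<^sub>F k in sequentially. (c2*(t k)^2 + c1*(t k)^3 + c0*(t k)^4) / ((1 - a^2*(t k)^2)*(1 - b^2*(t k)^2))
          = (c2*(be + of_nat k)^2 + c1*(be + of_nat k) + c0) / DD a b (be + of_nat k)"
      using ev_nz_shift[of be]
    proof eventually_elim
      case (elim k)
      define y where "y = be + of_nat k"
      have yz: "y \<noteq> 0" using elim y_def by simp
      have tk: "t k = inverse y" unfolding t_def y_def ..
      have e1: "1 - a^2*(inverse y)^2 = (y^2 - a^2)/y^2" using yz by (simp add: field_simps)
      have e2: "1 - b^2*(inverse y)^2 = (y^2 - b^2)/y^2" using yz by (simp add: field_simps)
      have e3: "c2*(inverse y)^2 + c1*(inverse y)^3 + c0*(inverse y)^4 = (c2*y^2 + c1*y + c0)/y^4"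
        using yz by (simp add: field_simps eval_nat_numeral)
      have e4: "(y^2 - a^2)/y^2 * ((y^2 - b^2)/y^2) = DD a b y / y^4"
        unfolding DD_def using yz by (simp add: field_simps eval_nat_numeral)
      show ?case unfolding tk e1 e2 e3 e4 y_def[symmetric] using yz
        by (cases "DD a b y = 0") (simp_all add: field_simps)
    qed
  qed
qed

lemma GG_lim: "(\<lambda>k. GG al a b n k) \<longlonglongrightarrow> 0"
proof -
  define c0 where "c0 = 5*(of_nat n)^2 + 4 * of_nat n + 1 - a^2 - b^2"
  define c1 :: complex where "c1 = 2*(3 * of_nat n + 1)"
  have RRe: "RR a b n y = 2*y^2 + c1*y + c0" for y
    unfolding RR_def c0_def c1_def by (simp add: algebra_simps)
  have lim1: "(\<lambda>k. RR a b n (al + of_nat k) / DD a b (al + of_nat k)) \<longlonglongrightarrow> 0"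
    unfolding RRe by (rule ratlim)
  have lim2: "(\<lambda>k. inverse (DD a b (al + of_nat (Suc i) + of_nat k))) \<longlonglongrightarrow> 0" for i
    using ratlim[of 0 "al + of_nat (Suc i)" 0 1 a b] by (simp add: divide_inverse)
  have lim3: "(\<lambda>k. kap a b n / (2*(2 * of_nat n+1)) * (RR a b n (al + of_nat k) / DD a b (al + of_nat k))
      * (\<Prod>i<n. inverse (DD a b (al + of_nat (Suc i) + of_nat k))))
      \<longlonglongrightarrow> kap a b n / (2*(2 * of_nat n+1)) * 0 * (\<Prod>i<n. 0)"
    by (intro tendsto_intros lim1 lim2)
  have eq: "GG al a b n k = kap a b n / (2*(2 * of_nat n+1)) * (RR a b n (al + of_nat k) / DD a b (al + of_nat k))
      * (\<Prod>i<n. inverse (DD a b (al + of_nat (Suc i) + of_nat k)))" for k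
  proof -
    have PPe: "PP a b n (al + of_nat k) = DD a b (al + of_nat k) * (\<Prod>i<n. DD a b (al + of_nat (Suc i) + of_nat k))"
      unfolding PP_def prod.lessThan_Suc_shift by (simp add: add_ac)
    have pi: "(\<Prod>i<n. inverse (DD a b (al + of_nat (Suc i) + of_nat k))) = inverse (\<Prod>i<n. DD a b (al + of_nat (Suc i) + of_nat k))"
      using prod_inversef[of "\<lambda>i. DD a b (al + of_nat (Suc i) + of_nat k)" "{..<n}"] by (simp add: o_def)
    show ?thesis unfolding GG_def PPe pi by (simp add: divide_inverse mult_ac)
  qed
  show ?thesis using lim3 unfolding eq[symmetric] by simp
qed

lemma nlb: fixes al s :: complex shows "real m - norm al - norm s \<le> norm (al + of_nat m + s)"
proof -
  have e: "of_nat m = (al + of_nat m + s) - (al + s)" by simp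
  have "norm (of_nat m :: complex) \<le> norm (al + of_nat m + s) + norm (al + s)"
    using norm_triangle_ineq4[of "al + of_nat m + s" "al + s"] by simp
  also have "norm (al + s) \<le> norm al + norm s" by (rule norm_triangle_ineq)
  finally have "norm (of_nat m :: complex) \<le> norm (al + of_nat m + s) + (norm al + norm s)" by simp
  then show ?thesis by simp
qed

lemma DD_factor: "DD a b y = (y + (-a)) * (y + a) * (y + (-b)) * (y + b)"
  unfolding DD_def by algebra

lemma DDlb:
  assumes "norm al + norm a + norm b \<le> real m"
  shows "(real m - (norm al + norm a + norm b))^4 \<le> norm (DD a b (al + of_nat m))"
proof -
  define t where "t = real m - (norm al + norm a + norm b)"
  have t0: "0 \<le> t" using assms t_def by simp
  have h: "t \<le> norm (al + of_nat m + s)" if "norm s \<le> norm a + norm b" for s :: complex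
    using nlb[of m al s] that t_def by simp
  have h1: "t \<le> norm (al + of_nat m + (-a))" by (rule h) simp
  have h2: "t \<le> norm (al + of_nat m + a)" by (rule h) simp
  have h3: "t \<le> norm (al + of_nat m + (-b))" by (rule h) simp
  have h4: "t \<le> norm (al + of_nat m + b)" by (rule h) simp
  have "t*t*t*t \<le> norm (al + of_nat m + (-a)) * norm (al + of_nat m + a) * norm (al + of_nat m + (-b)) * norm (al + of_nat m + b)"
    by (intro mult_mono h1 h2 h3 h4 t0 mult_nonneg_nonneg norm_ge_zero)
  also have "\<dots> = norm (DD a b (al + of_nat m))"
    unfolding DD_factor by (simp add: norm_mult)
  finally show ?thesis unfolding t_def by (simp add: eval_nat_numeral mult_ac)
qed

lemma poch_norm: "norm z \<le> r \<Longrightarrow> norm (pochhammer (z::complex) n) \<le> pochhammer r n"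
proof (induction n)
  case 0 then show ?case by simp
next
  case (Suc n)
  have r0: "0 \<le> r" using Suc.prems norm_ge_zero order_trans by blast
  have "norm (pochhammer z (Suc n)) = norm (pochhammer z n) * norm (z + of_nat n)"
    by (simp add: pochhammer_Suc norm_mult)
  also have "\<dots> \<le> pochhammer r n * (r + of_nat n)"
  proof (rule mult_mono)
    show "norm (pochhammer z n) \<le> pochhammer r n" using Suc by simp
    show "norm (z + of_nat n) \<le> r + of_nat n"
      using norm_triangle_ineq[of z "of_nat n"] Suc.prems by simp
    show "0 \<le> pochhammer r n" unfolding pochhammer_prod using r0 by (intro prod_nonneg) auto
  qed simp
  also have "\<dots> = pochhammer r (Suc n)" by (simp add: pochhammer_Suc)
  finally show ?case .
qed

lemma pp_bound:
  assumes "norm a + norm b \<le> r"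
  shows "norm (pp a b n) \<le> (\<Prod>i<n. (1 + r + real i)^4)"
proof -
  have r0: "0 \<le> r" using assms norm_ge_zero by (meson add_nonneg_nonneg order_trans)
  have b: "norm (pochhammer (1 + s) n) \<le> pochhammer (1 + r) n" if "norm s \<le> norm a + norm b" for s :: complex
    by (rule poch_norm) (use that assms norm_triangle_ineq[of 1 s] in simp)
  have pn: "0 \<le> pochhammer (1 + r) n" using r0 by (intro pochhammer_nonneg) simp
  have "norm (pp a b n) = norm (pochhammer (1 + (a+b)) n) * norm (pochhammer (1 + (a-b)) n) * norm (pochhammer (1 + (-a+b)) n) * norm (pochhammer (1 + (-a-b)) n)"
    unfolding pp_def by (simp add: norm_mult algebra_simps)
  also have "\<dots> \<le> pochhammer (1 + r) n * pochhammer (1 + r) n * pochhammer (1 + r) n * pochhammer (1 + r) n"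
  proof -
    have n1: "norm (a+b) \<le> norm a + norm b" by (rule norm_triangle_ineq)
    have n2: "norm (a-b) \<le> norm a + norm b" by (rule norm_triangle_ineq4)
    have n3: "norm (-a+b) \<le> norm a + norm b" using norm_triangle_ineq[of "-a" b] by simp
    have n4: "norm (-a-b) \<le> norm a + norm b" using norm_triangle_ineq4[of "-a" b] by simp
    show ?thesis
      by (intro mult_mono b[OF n1] b[OF n2] b[OF n3] b[OF n4] pn mult_nonneg_nonneg norm_ge_zero)
  qed
  also have "\<dots> = (pochhammer (1 + r) n)^4" by (simp add: eval_nat_numeral)
  also have "\<dots> = (\<Prod>i<n. (1 + r + real i)^4)"
    unfolding pochhammer_prod atLeast0LessThan prod_power_distrib ..
  finally show ?thesis .
qed

lemma real_tail:
  fixes A Mr k :: real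
  assumes A0: "0 \<le> A" and h: "4*A + 1 \<le> Mr" and k: "k + 1 \<le> Mr" and k0: "0 \<le> k"
  shows "2*Mr/(Mr-A)^4 \<le> 32/(k+1)^2"
proof -
  have M1: "1 \<le> Mr" using h A0 by simp
  have h1: "Mr/2 \<le> Mr - A" using h A0 by simp
  have "(Mr/2)^4 \<le> (Mr-A)^4" by (rule power_mono[OF h1]) (use M1 in simp)
  then have d: "Mr^4/16 \<le> (Mr-A)^4" by (simp add: power_divide)
  have pos: "0 < Mr^4/16" using M1 by simp
  have "2*Mr/(Mr-A)^4 \<le> 2*Mr/(Mr^4/16)"
  proof (rule divide_left_mono[OF d])
    have "0 < Mr - A" using h1 M1 by simp
    then show "0 < (Mr - A)^4 * (Mr^4/16)" using pos by simp
  qed (use M1 in simp)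
  also have "\<dots> = 32/Mr^3" using M1 by (simp add: field_simps eval_nat_numeral)
  also have "\<dots> \<le> 32/(k+1)^2"
  proof (rule divide_left_mono)
    have "(k+1)^2 \<le> Mr^2" by (rule power_mono[OF k]) (use k0 in simp)
    also have "Mr^2 \<le> Mr^3" using M1 by (simp add: power_increasing)
    finally show "(k+1)^2 \<le> Mr^3" .
    show "0 < Mr^3 * (k+1)^2" using M1 k0 by simp
  qed simp
  finally show ?thesis .
qed

lemma FF_bound:
  fixes al a b :: complex
  assumes N: "4*(norm al + norm a + norm b) + 1 \<le> real N"
  shows "norm (FF al a b N (k+N)) \<le> 32 * (3/4)^N / (real k + 1)^2"
proof -
  define A where "A = norm al + norm a + norm b"
  define M where "M = k + N"
  define Mr where "Mr = real M"
  define x where "x = al + of_nat M"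
  have A0: "0 \<le> A" unfolding A_def by simp
  have NA: "4*A + 1 \<le> real N" using N A_def by simp
  have MN: "real N \<le> Mr" unfolding Mr_def M_def by simp
  have kM: "real k + 1 \<le> Mr" using NA A0 unfolding Mr_def M_def by simp
  define f where "f = (\<lambda>i::nat. (1 + A + real i)^4)"
  define g where "g = (\<lambda>i::nat. (real (M + Suc i) - A)^4)"
  define h where "h = (\<lambda>i::nat. norm (DD a b (al + of_nat (M + Suc i))))"
  have PPe: "PP a b N x = DD a b x * (\<Prod>i<N. DD a b (al + of_nat (M + Suc i)))"
    unfolding PP_def prod.lessThan_Suc_shift x_def by (simp add: add_ac)
  have gpos: "0 < g i" for i
  proof -
    have "A < real (M + Suc i)" using NA A0 MN unfolding Mr_def by simp
    then show ?thesis unfolding g_def by simp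
  qed
  have L1: "(Mr - A)^4 \<le> norm (DD a b x)"
    unfolding x_def Mr_def A_def by (rule DDlb) (use NA A0 MN in \<open>simp add: Mr_def A_def\<close>)
  have L1p: "0 < (Mr - A)^4" using NA A0 MN by simp
  have L2: "(\<Prod>i<N. g i) \<le> (\<Prod>i<N. h i)"
  proof (rule prod_mono)
    fix i assume "i \<in> {..<N}"
    have "g i \<le> h i" unfolding g_def h_def A_def
      by (rule DDlb) (use NA A0 MN in \<open>simp add: Mr_def A_def\<close>)
    then show "0 \<le> g i \<and> g i \<le> h i" using gpos[of i] by simp
  qed
  have Gpos: "0 < (\<Prod>i<N. g i)" using gpos by (intro prod_pos) auto
  have U: "norm (pp a b N) \<le> (\<Prod>i<N. f i)" unfolding f_def by (rule pp_bound) (simp add: A_def)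
  have K: "norm (kap a b N) \<le> norm (pp a b N) / 2"
  proof -
    have C: "1 \<le> real ((2*N) choose N)"
    proof -
      have "0 < (2*N) choose N" by (intro zero_less_binomial) simp
      then show ?thesis by (metis One_nat_def Suc_leI of_nat_1 of_nat_le_iff)
    qed
    have "norm (kap a b N) = norm (pp a b N) / (2 * real ((2*N) choose N))"
      unfolding kap_def by (simp add: norm_mult norm_divide norm_power)
    also have "\<dots> \<le> norm (pp a b N) / 2"
      by (rule divide_left_mono) (use C in auto)
    finally show ?thesis .
  qed
  have T: "norm (2*x + of_nat N) \<le> 4*Mr"
  proof -
    have "norm (2*x + of_nat N) \<le> norm (2*x) + norm (of_nat N :: complex)" by (rule norm_triangle_ineq)
    also have "norm (2*x) = 2 * norm x" by (simp add: norm_mult)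
    also have "norm x \<le> norm al + Mr" unfolding x_def Mr_def using norm_triangle_ineq[of al "of_nat M"] by simp
    finally have "norm (2*x + of_nat N) \<le> 2 * norm al + 2 * Mr + real N" by simp
    then show ?thesis using NA A0 MN A_def norm_ge_zero[of a] norm_ge_zero[of b] by linarith
  qed
  have R: "(\<Prod>i<N. f i) / (\<Prod>i<N. g i) \<le> (3/4)^N"
  proof -
    have "(\<Prod>i<N. f i) / (\<Prod>i<N. g i) = (\<Prod>i<N. f i / g i)" by (rule prod_dividef[symmetric])
    also have "\<dots> \<le> (\<Prod>i<N. 3/4)"
    proof (rule prod_mono)
      fix i assume i: "i \<in> {..<N}"
      have f0: "0 \<le> f i" unfolding f_def using A0 by simp
      have lin: "1 + A + real i \<le> 3/4 * (real (M + Suc i) - A)"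
        using i NA A0 MN unfolding Mr_def by simp
      have "f i \<le> (3/4 * (real (M + Suc i) - A))^4"
        unfolding f_def by (rule power_mono[OF lin]) (use A0 in simp)
      also have "\<dots> = (3/4)^4 * g i" unfolding g_def by (rule power_mult_distrib)
      also have "\<dots> \<le> 3/4 * g i" using gpos[of i] by (intro mult_right_mono) (auto simp: eval_nat_numeral)
      finally have "f i / g i \<le> 3/4" using gpos[of i] by (simp add: divide_le_eq)
      then show "0 \<le> f i / g i \<and> f i / g i \<le> 3/4" using f0 gpos[of i] by simp
    qed
    also have "\<dots> = (3/4)^N" by simp
    finally show ?thesis .
  qed
  have normF: "norm (FF al a b N (k+N)) = norm (kap a b N) * norm (2*x + of_nat N) / (norm (DD a b x) * (\<Prod>i<N. h i))"
    unfolding FF_def M_def[symmetric] x_def[symmetric] PPe h_def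
    by (simp add: norm_mult norm_divide prod_norm)
  also have "\<dots> \<le> (norm (pp a b N) / 2) * (4*Mr) / ((Mr - A)^4 * (\<Prod>i<N. g i))"
  proof (rule frac_le)
    show "0 \<le> norm (pp a b N) / 2 * (4 * Mr)" using MN by simp
    show "norm (kap a b N) * norm (2 * x + of_nat N) \<le> norm (pp a b N) / 2 * (4 * Mr)"
      by (intro mult_mono K T) auto
    show "0 < (Mr - A)^4 * (\<Prod>i<N. g i)" using L1p Gpos by simp
    show "(Mr - A)^4 * (\<Prod>i<N. g i) \<le> norm (DD a b x) * (\<Prod>i<N. h i)"
      by (intro mult_mono L1 L2) (use Gpos L1p in auto)
  qed
  also have "\<dots> = (2*Mr/(Mr-A)^4) * (norm (pp a b N) / (\<Prod>i<N. g i))"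
    by (simp add: field_simps)
  also have "\<dots> \<le> (32/(real k + 1)^2) * (3/4)^N"
  proof (rule mult_mono)
    show "2*Mr/(Mr-A)^4 \<le> 32/(real k + 1)^2"
      by (rule real_tail) (use A0 NA MN kM in auto)
    have "norm (pp a b N) / (\<Prod>i<N. g i) \<le> (\<Prod>i<N. f i) / (\<Prod>i<N. g i)"
      by (rule divide_right_mono[OF U]) (use Gpos in simp)
    then show "norm (pp a b N) / (\<Prod>i<N. g i) \<le> (3/4)^N" using R by simp
    show "0 \<le> 32/(real k + 1)^2" by simp
    show "0 \<le> norm (pp a b N) / (\<Prod>i<N. g i)" using Gpos by simp
  qed
  finally show ?thesis by simp
qed

context
  fixes al a b :: complex
  assumes nz: "\<And>m. DD a b (al + of_nat m) \<noteq> 0"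
begin

lemma PP_nz: "PP a b n (al + of_nat k) \<noteq> 0"
  unfolding PP_def using nz by (simp add: add.assoc flip: of_nat_add)

lemma WZ: "FF al a b (Suc n) k - FF al a b n k = GG al a b n (Suc k) - GG al a b n k"
proof -
  define x where "x = al + of_nat k"
  define m :: complex where "m = of_nat n"
  define P where "P = PP a b n x"
  define P1 where "P1 = PP a b n (x+1)"
  define d0 where "d0 = DD a b x"
  define dN where "dN = DD a b (x + m + 1)"
  define c where "c = 2*(2*m+1)"
  define E where "E = (m+1+a+b)*(m+1+a-b)*(m+1-a+b)*(m+1-a-b)"
  define K where "K = kap a b n"
  have x1: "al + of_nat (Suc k) = x + 1" by (simp add: x_def)
  have dNe: "DD a b (x + of_nat (Suc n)) = dN" by (simp add: dN_def m_def add_ac)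
  have e1: "PP a b (Suc n) x = P * dN" using PP_Suc1[of a b n x] dNe P_def by simp
  have e2: "PP a b (Suc n) x = d0 * P1" using PP_Suc2[of a b n x] d0_def P1_def by simp
  have Pnz: "P \<noteq> 0" unfolding P_def x_def by (rule PP_nz)
  have d0nz: "d0 \<noteq> 0" unfolding d0_def x_def by (rule nz)
  have dNnz: "dN \<noteq> 0" unfolding dN_def x_def m_def using nz[of "k + n + 1"] by (simp add: add_ac)
  have cnz: "c \<noteq> 0" unfolding c_def m_def
    by (metis of_nat_Suc of_nat_eq_0_iff mult_2 add.commute nat.distinct(1) of_nat_add of_nat_mult mult_eq_0_iff zero_neq_numeral)
  have P1e: "P1 = P * dN / d0" using e1 e2 d0nz by (simp add: field_simps)
  have core: "(-E*(m+1)) * (2*x+m+1) - c*(2*x+m)*dN = RR a b n (x+1)*d0 - RR a b n x * dN"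
    unfolding E_def c_def dN_def d0_def RR_def DD_def m_def[symmetric] using core1[of m a b x]
    by (simp add: algebra_simps)
  have KS: "kap a b (Suc n) = K * (-E*(m+1)/c)"
    unfolding K_def kap_Suc E_def c_def m_def by simp
  have L: "FF al a b (Suc n) k - FF al a b n k = K/(c*P*dN) * ((-E*(m+1)) * (2*x+m+1) - c*(2*x+m)*dN)"
    unfolding FF_def x_def[symmetric] KS e1 K_def[symmetric] P_def[symmetric]
    using Pnz dNnz cnz by (simp add: field_simps m_def)
  have R: "GG al a b n (Suc k) - GG al a b n k = K/(c*P*dN) * (RR a b n (x+1)*d0 - RR a b n x * dN)"
  proof -
    have cd: "2*(2 * of_nat n+1) = c" by (simp add: c_def m_def)
    show ?thesis
      unfolding GG_def x1 x_def[symmetric] K_def[symmetric] P_def[symmetric] P1_def[symmetric] cd P1e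
      using Pnz dNnz cnz d0nz by (simp add: field_simps)
  qed
  show ?thesis using L R core by simp
qed


lemma DIAG: "FF al a b n n + GG al a b n (Suc n) = rhs4 al a b (Suc n) / 2"
proof -
  define m :: complex where "m = of_nat n"
  define y where "y = al + m"
  define X where "X = (2 * Suc n) choose Suc n"
  define C where "C = (2*n) choose n"
  define c where "c = 2*(2*m+1)"
  define K where "K = kap a b n"
  define Qn where "Qn = (\<Prod>i<n. DD a b (al + of_nat i))"
  define S where "S = PP a b (Suc n) y"
  define P where "P = PP a b n y"
  define P1 where "P1 = PP a b n (y+1)"
  define d0 where "d0 = DD a b y"
  define dT where "dT = DD a b (y + (m+1))"
  have B: "(m + 1) * of_nat X = c * of_nat C"
  proof -
    have "(of_nat (Suc n * X) :: complex) = of_nat (2 * (2*n+1) * C)"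
      using binom_rel[of n, folded X_def C_def] by metis
    then show ?thesis unfolding m_def c_def by (simp add: algebra_simps)
  qed
  have Cpos: "C > 0" unfolding C_def by simp
  have nz2: "(m + 1 :: complex) \<noteq> 0" unfolding m_def
    by (metis of_nat_Suc of_nat_eq_0_iff add.commute nat.distinct(1))
  have cnz: "c \<noteq> 0" unfolding c_def m_def
    by (metis of_nat_Suc of_nat_eq_0_iff mult_2 add.commute nat.distinct(1) of_nat_add of_nat_mult mult_eq_0_iff zero_neq_numeral)
  have Qnz: "Qn \<noteq> 0" unfolding Qn_def using nz by simp
  have Pnz: "P \<noteq> 0" unfolding P_def y_def m_def by (rule PP_nz)
  have P1nz: "P1 \<noteq> 0" unfolding P1_def y_def m_def using PP_nz[of n "Suc n"] by (simp add: add_ac)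
  have d0nz: "d0 \<noteq> 0" unfolding d0_def y_def m_def by (rule nz)
  have dTnz: "dT \<noteq> 0" unfolding dT_def y_def m_def using nz[of "n + Suc n"] by (simp add: add_ac)
  have S1: "S = P * dT" unfolding S_def P_def dT_def PP_Suc1 m_def by (simp add: add_ac)
  have S2: "S = d0 * P1" unfolding S_def P1_def d0_def PP_Suc2 by simp
  have K0: "K = (-1)^n * pp a b n / (2 * of_nat C)"
    unfolding K_def kap_def C_def by (rule refl)
  have Q2: "(\<Prod>i<2 * Suc n. DD a b (al + of_nat i)) = Qn * S"
  proof -
    have "(\<Prod>i<2 * Suc n. DD a b (al + of_nat i)) = (\<Prod>i<n + Suc (Suc n). DD a b (al + of_nat i))"
    proof -
      have e: "2 * Suc n = n + Suc (Suc n)" by simp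
      show ?thesis unfolding e ..
    qed
    also have "\<dots> = Qn * (\<Prod>i<Suc (Suc n). DD a b (al + of_nat (n+i)))"
      unfolding prod_lessThan_add_split Qn_def ..
    also have "(\<Prod>i<Suc (Suc n). DD a b (al + of_nat (n+i))) = S"
      unfolding S_def PP_def y_def m_def by (simp add: add_ac)
    finally show ?thesis .
  qed
  have R: "rhs4 al a b (Suc n) = ((-1)^n * pp a b n * Qn) / ((m+1) * of_nat X * (Qn * S)) * q4 al a b (Suc n)"
  proof -
    have num: "(-1) ^ (Suc n - 1)
       * pochhammer (1 + a + b) (Suc n - 1) * pochhammer (1 + a - b) (Suc n - 1)
       * pochhammer (1 - a + b) (Suc n - 1) * pochhammer (1 - a - b) (Suc n - 1)
       * pochhammer (al + a) (Suc n - 1) * pochhammer (al - a) (Suc n - 1)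
       * pochhammer (al + b) (Suc n - 1) * pochhammer (al - b) (Suc n - 1) = (-1)^n * pp a b n * Qn"
      unfolding Qn_def Qlem[symmetric] pp_def by (simp add: mult_ac)
    have den: "of_nat (Suc n) * of_nat ((2 * Suc n) choose Suc n)
       * pochhammer (al + a) (2 * Suc n) * pochhammer (al - a) (2 * Suc n)
       * pochhammer (al + b) (2 * Suc n) * pochhammer (al - b) (2 * Suc n) = (m+1) * of_nat X * (Qn * S)"
      unfolding Q2[symmetric] Qlem[symmetric] X_def m_def by (simp add: mult_ac)
    show ?thesis unfolding rhs4_def num den ..
  qed
  have q: "q4 al a b (Suc n) = c * (2*y + m) * dT + RR a b n (y + 1) * d0"
    unfolding core2 c_def y_def dT_def d0_def m_def by (simp add: algebra_simps)
  have F: "FF al a b n n = K * (2*y+m) / P"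
    unfolding FF_def K_def y_def m_def P_def ..
  have G: "GG al a b n (Suc n) = K * RR a b n (y+1) / (c * P1)"
    unfolding GG_def K_def y_def m_def P1_def c_def by (simp add: add_ac)
  define Z where "Z = (-1)^n * pp a b n"
  define T where "T = c * (2*y + m) * dT + RR a b n (y + 1) * d0"
  have Snz: "S \<noteq> 0" using S1 Pnz dTnz by simp
  have Cnz: "(of_nat C :: complex) \<noteq> 0" using Cpos by simp
  have 1: "(2*y+m)/P = (2*y+m)*dT/S" using S1 Pnz dTnz by simp
  have 2: "RR a b n (y+1)/(c*P1) = RR a b n (y+1)*d0/(c*S)" using S2 d0nz P1nz cnz by simp
  have L: "FF al a b n n + GG al a b n (Suc n) = Z/(2 * of_nat C) * (T/(c*S))"
  proof -
    have "FF al a b n n + GG al a b n (Suc n) = Z/(2 * of_nat C) * ((2*y+m)/P + RR a b n (y+1)/(c*P1))"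
      unfolding F G K0 Z_def using Cnz cnz P1nz Pnz by (simp add: field_simps)
    also have "(2*y+m)/P + RR a b n (y+1)/(c*P1) = T/(c*S)"
      unfolding 1 2 T_def using cnz Snz by (simp add: field_simps)
    finally show ?thesis .
  qed
  have RR': "rhs4 al a b (Suc n) / 2 = Z * T / (2 * (c * of_nat C) * S)"
  proof -
    have "X > 0" unfolding X_def by (intro zero_less_binomial) simp
    then have Xnz: "(of_nat X :: complex) \<noteq> 0" by simp
    have "rhs4 al a b (Suc n) / 2 = Z * T / (2 * ((m + 1) * of_nat X) * S)"
      unfolding R q Z_def[symmetric] T_def[symmetric] using aux_cancel[OF Qnz] by simp
    then show ?thesis unfolding B .
  qed
  show ?thesis unfolding L RR' using Cnz cnz Snz by (simp add: field_simps)
qed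


lemma FF0: "FF al a b 0 k = lhs4 al a b k"
proof -
  have "FF al a b 0 k = (1/2) * (2*(al + of_nat k)) / DD a b (al + of_nat k)"
    unfolding FF_def kap_def pp_def PP_def by simp
  also have "\<dots> = (al + of_nat k) / DD a b (al + of_nat k)"
    using nz[of k] by (simp add: field_simps)
  finally show ?thesis unfolding lhs4_def DD_def by (simp add: add.commute)
qed

definition "N0 = nat \<lceil>4*(norm al + norm a + norm b) + 1\<rceil>"

lemma N0_ge: "N \<ge> N0 \<Longrightarrow> 4*(norm al + norm a + norm b) + 1 \<le> real N"
  unfolding N0_def by linarith

lemma summable_inv_sq: "summable (\<lambda>k. 32 / (real k + 1)^2)"
proof -
  have "summable (\<lambda>n. inverse (real n ^ 2))" by (rule inverse_power_summable) simp
  then have "summable (\<lambda>n. inverse (real (n + 1) ^ 2))" by (subst summable_iff_shift) 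
  then have "summable (\<lambda>n. 32 * inverse (real (n + 1) ^ 2))" by (rule summable_mult)
  then show ?thesis by (simp add: divide_inverse add.commute)
qed

lemma summable_FF_N0: "summable (FF al a b N0)"
proof -
  have "summable (\<lambda>k. FF al a b N0 (k + N0))"
  proof (rule summable_comparison_test')
    show "summable (\<lambda>k. (3/4)^N0 * (32 / (real k + 1)^2))"
      by (rule summable_mult[OF summable_inv_sq])
    show "norm (FF al a b N0 (k + N0)) \<le> (3/4)^N0 * (32 / (real k + 1)^2)" for k
    proof -
      have e: "32 * (3/4)^N0 / (real k + 1)^2 = (3/4)^N0 * (32 / (real k + 1)^2)" by simp
      show ?thesis using FF_bound[OF N0_ge[OF order_refl], of k] unfolding e .
    qed
  qed
  then show ?thesis by (subst (asm) summable_iff_shift)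
qed

lemma tele_summable: "summable (\<lambda>k. GG al a b n (Suc k) - GG al a b n k)"
  by (rule telescope_summable[OF GG_lim])

lemma summable_FF_down: "j \<le> N0 \<Longrightarrow> summable (FF al a b (N0 - j))"
proof (induction j)
  case 0 then show ?case using summable_FF_N0 by simp
next
  case (Suc j)
  define n where "n = N0 - Suc j"
  have e: "Suc n = N0 - j" using Suc.prems n_def by simp
  have s1: "summable (FF al a b (Suc n))" using Suc e by simp
  have "summable (\<lambda>k. FF al a b (Suc n) k - (GG al a b n (Suc k) - GG al a b n k))"
    by (rule summable_diff[OF s1 tele_summable])
  moreover have "(\<lambda>k. FF al a b (Suc n) k - (GG al a b n (Suc k) - GG al a b n k)) = FF al a b n"
    using WZ by (auto simp: algebra_simps fun_eq_iff)
  ultimately show ?case unfolding n_def by simp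
qed

lemma summable_FF: "summable (FF al a b n)"
proof (induction n)
  case 0 then show ?case using summable_FF_down[of N0] by simp
next
  case (Suc n)
  have "summable (\<lambda>k. FF al a b n k + (GG al a b n (Suc k) - GG al a b n k))"
    by (rule summable_add[OF Suc tele_summable])
  moreover have "(\<lambda>k. FF al a b n k + (GG al a b n (Suc k) - GG al a b n k)) = FF al a b (Suc n)"
    using WZ by (auto simp: algebra_simps fun_eq_iff)
  ultimately show ?case by simp
qed

definition "UU n = (\<Sum>k. FF al a b n (k + n))"

lemma UU_step: "UU n - UU (Suc n) = rhs4 al a b (Suc n) / 2"
proof -
  define f where "f = (\<lambda>k. FF al a b n (k + n))"
  have sf: "summable f" unfolding f_def using summable_FF[of n] by (subst summable_iff_shift)
  have h1: "UU n = FF al a b n n + (\<Sum>k. FF al a b n (k + Suc n))"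
    using suminf_split_head[OF sf] unfolding UU_def f_def[symmetric] by (simp add: f_def)
  define h where "h = (\<lambda>k. GG al a b n (k + Suc n))"
  have h0: "h \<longlonglongrightarrow> 0" unfolding h_def by (rule LIMSEQ_ignore_initial_segment[OF GG_lim])
  have t: "(\<lambda>k. h (Suc k) - h k) sums (0 - h 0)" by (rule telescope_sums[OF h0])
  have s2: "(\<lambda>k. FF al a b n (k + Suc n)) sums (\<Sum>k. FF al a b n (k + Suc n))"
    using summable_FF[of n] by (intro summable_sums) (subst summable_iff_shift)
  have "(\<lambda>k. FF al a b n (k + Suc n) + (h (Suc k) - h k)) sums ((\<Sum>k. FF al a b n (k + Suc n)) + (0 - h 0))"
    by (rule sums_add[OF s2 t])
  moreover have "(\<lambda>k. FF al a b n (k + Suc n) + (h (Suc k) - h k)) = (\<lambda>k. FF al a b (Suc n) (k + Suc n))"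
    unfolding h_def using WZ by (auto simp: algebra_simps fun_eq_iff)
  ultimately have "UU (Suc n) = (\<Sum>k. FF al a b n (k + Suc n)) - GG al a b n (Suc n)"
    unfolding UU_def h_def using sums_unique by fastforce
  then have "UU n - UU (Suc n) = FF al a b n n + GG al a b n (Suc n)" using h1 by simp
  then show ?thesis using DIAG[of n] by simp
qed

lemma UU_partial: "(\<Sum>n<N. rhs4 al a b (Suc n) / 2) = UU 0 - UU N"
  by (induction N) (simp_all add: UU_step[symmetric])

lemma UU_lim: "UU \<longlonglongrightarrow> 0"
proof (rule Lim_null_comparison)
  define S where "S = (\<Sum>k. 32 / (real k + 1)^2)"
  show "\<forall>\<^sub>F N in sequentially. norm (UU N) \<le> (3/4)^N * S"
    unfolding eventually_sequentially
  proof (intro exI allI impI)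
    fix N assume "N0 \<le> N"
    have "norm (UU N) \<le> (\<Sum>k. (3/4)^N * (32 / (real k + 1)^2))"
      unfolding UU_def
    proof (rule norm_suminf_le)
      show "norm (FF al a b N (k + N)) \<le> (3/4)^N * (32 / (real k + 1)^2)" for k
      proof -
        have e: "32 * (3/4)^N / (real k + 1)^2 = (3/4)^N * (32 / (real k + 1)^2)" by simp
        show ?thesis using FF_bound[OF N0_ge[OF \<open>N0 \<le> N\<close>], of k] unfolding e .
      qed
      show "summable (\<lambda>k. (3/4)^N * (32 / (real k + 1)^2))"
        by (rule summable_mult[OF summable_inv_sq])
    qed
    also have "\<dots> = (3/4)^N * S" unfolding S_def by (rule suminf_mult[OF summable_inv_sq])
    finally show "norm (UU N) \<le> (3/4)^N * S" .
  qed
  show "(\<lambda>N. (3/4)^N * S) \<longlonglongrightarrow> 0"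
    by (rule tendsto_mult_left_zero[OF LIMSEQ_power_zero]) simp
qed

lemma main_ctx: "summable (lhs4 al a b) \<and> summable (\<lambda>n. rhs4 al a b (Suc n))
       \<and> (\<Sum>k. lhs4 al a b k) = (1/2) * (\<Sum>n. rhs4 al a b (Suc n))"
proof -
  have U0: "UU 0 = (\<Sum>k. lhs4 al a b k)" unfolding UU_def FF0 by simp
  have sl: "summable (lhs4 al a b)" using summable_FF[of 0] unfolding FF0 by simp
  have "(\<lambda>N. UU 0 - UU N) \<longlonglongrightarrow> UU 0 - 0" by (intro tendsto_intros UU_lim)
  then have "(\<lambda>n. rhs4 al a b (Suc n) / 2) sums UU 0" unfolding sums_def UU_partial by simp
  then have "(\<lambda>n. 2 * (rhs4 al a b (Suc n) / 2)) sums (2 * UU 0)" by (rule sums_mult)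
  then have sr: "(\<lambda>n. rhs4 al a b (Suc n)) sums (2 * UU 0)" by simp
  have e: "(\<Sum>n. rhs4 al a b (Suc n)) = 2 * UU 0" using sums_unique[OF sr] by simp
  show ?thesis using sl sums_summable[OF sr] unfolding e U0 by simp
qed

end


theorem theorem4:
  fixes \<alpha> a b :: complex
  assumes "\<forall>m::nat. \<alpha> + a \<noteq> - of_nat m"
      and "\<forall>m::nat. \<alpha> - a \<noteq> - of_nat m"
      and "\<forall>m::nat. \<alpha> + b \<noteq> - of_nat m"
      and "\<forall>m::nat. \<alpha> - b \<noteq> - of_nat m"
  shows "summable (lhs4 \<alpha> a b)
       \<and> summable (\<lambda>n. rhs4 \<alpha> a b (Suc n))
       \<and> (\<Sum>k. lhs4 \<alpha> a b k) = (1/2) * (\<Sum>n. rhs4 \<alpha> a b (Suc n))"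
proof (rule main_ctx)
  fix m :: nat
  have h: "\<alpha> + of_nat m + s \<noteq> 0" if "\<forall>m::nat. \<alpha> + s \<noteq> - of_nat m" for s
  proof
    assume "\<alpha> + of_nat m + s = 0"
    then have "\<alpha> + s = - of_nat m" by (metis add.commute add.left_commute add_eq_0_iff)
    with that show False by blast
  qed
  have h1: "\<alpha> + of_nat m + (-a) \<noteq> 0" by (rule h) (use assms(2) in simp)
  have h2: "\<alpha> + of_nat m + a \<noteq> 0" by (rule h) (use assms(1) in simp)
  have h3: "\<alpha> + of_nat m + (-b) \<noteq> 0" by (rule h) (use assms(4) in simp)
  have h4: "\<alpha> + of_nat m + b \<noteq> 0" by (rule h) (use assms(3) in simp)
  show "DD a b (\<alpha> + of_nat m) \<noteq> 0"
    unfolding DD_factor using h1 h2 h3 h4 by simp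
qed

end
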